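(* Let $K\subset K'$ be a field extension, $x=(x_1,\ldots,x_n)$, and let $M\subset K[x]^p$ be a finitely generated $K[x]$-submodule. Let $J_1,\ldots,J_p$ be subsets of $\{1,\ldots,n\}$, write $x_{J_i}=(x_k)_{k\in J_i}$, and set $A_i=K[x_{J_i}]$, $A'_i=K'[x_{J_i}]$ for $i\in\{1,\ldots,p\}$. Put $$\mathcal{N}=M\cap (A_1\times\cdots\times A_p),\qquad \mathcal{N}'=(K'[x]M)\cap(A'_1\times\cdots\times A'_p),$$ where $K'[x]M\subset K'[x]^p$ is the $K'[x]$-submodule generated by $M$. If $\hat u=\sum_{j=1}^r w_j\hat v_j\in\mathcal{N}'$ for some $w_1,\ldots,w_r\in M$ and $\hat v_1,\ldots,\hat v_r\in K'[x]$, then there exist $v_1,\ldots,v_r\in K[x]$ such that $u=\sum_{j=1}^r w_jv_j\in\mathcal{N}$ and $\min_{i\in\{1,\ldots,p\}}\operatorname{ord} u_i=\min_{i\in\{1,\ldots,p\}}\operatorname{ord}\hat u_i$.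
   Context: For a polynomial $g$ in $x$, $\operatorname{ord} g$ denotes its order, i.e. the least total degree of a monomial appearing in $g$ with nonzero coefficient ($\operatorname{ord}0=\infty$). For a vector $u=(u_1,\ldots,u_p)$, $u_i$ denotes its $i$-th component. *)

theory Defs
  imports "HOL-Library.Poly_Mapping" "HOL-Library.Extended_Nat"
begin

text \<open>Multivariate polynomials with coefficients in a field type 'a, in the variables
  x_0, x_1, x_2, ... : a polynomial is a finitely supported map from monomials
  (finitely supported exponent vectors) to coefficients.
  Multiplication is the convolution product from Poly_Mapping.\<close>

type_synonym 'a mpol = "(nat \<Rightarrow>\<^sub>0 nat) \<Rightarrow>\<^sub>0 'a"

definition subfield :: "'a::field set \<Rightarrow> bool" where
  "subfield K \<longleftrightarrow> 0 \<in> K \<and> 1 \<in> K \<and>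
     (\<forall>a\<in>K. \<forall>b\<in>K. a + b \<in> K \<and> a - b \<in> K \<and> a * b \<in> K) \<and>
     (\<forall>a\<in>K. inverse a \<in> K)"

definition polys :: "'a::field set \<Rightarrow> nat set \<Rightarrow> 'a mpol set" where
  "polys K V = {f :: 'a mpol. (\<forall>m. Poly_Mapping.lookup f m \<in> K) \<and> (\<forall>m\<in>Poly_Mapping.keys f. Poly_Mapping.keys m \<subseteq> V)}"

definition mdeg :: "(nat \<Rightarrow>\<^sub>0 nat) \<Rightarrow> nat" where
  "mdeg m = (\<Sum>k\<in>Poly_Mapping.keys m. Poly_Mapping.lookup m k)"

definition ord :: "'a::zero mpol \<Rightarrow> enat" where
  "ord f = (if f = 0 then \<infinity> else enat (Min (mdeg ` Poly_Mapping.keys f)))"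

text \<open>Vectors in R^p: maps nat \<Rightarrow> polynomial with components indexed by 0..<p,
  zero outside.  The i-th component of the paper (1-based) is component i-1 here.\<close>
definition vecs :: "'a::zero mpol set \<Rightarrow> nat \<Rightarrow> (nat \<Rightarrow> 'a mpol) set" where
  "vecs R p = {u. (\<forall>i<p. u i \<in> R) \<and> (\<forall>i\<ge>p. u i = 0)}"

definition lin_comb :: "'a::comm_ring_1 mpol set \<Rightarrow> (nat \<Rightarrow> 'a mpol) set \<Rightarrow> (nat \<Rightarrow> 'a mpol) set" where
  "lin_comb R S = {u. \<exists>r (c :: nat \<Rightarrow> 'a mpol) (g :: nat \<Rightarrow> nat \<Rightarrow> 'a mpol).
      (\<forall>j<r. c j \<in> R \<and> g j \<in> S) \<and> u = (\<lambda>i. \<Sum>j<r. g j i * c j)}"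

definition fg_submodule :: "'a::comm_ring_1 mpol set \<Rightarrow> nat \<Rightarrow> (nat \<Rightarrow> 'a mpol) set \<Rightarrow> bool" where
  "fg_submodule R p M \<longleftrightarrow> (\<exists>G. finite G \<and> G \<subseteq> vecs R p \<and> M = lin_comb R G)"

end

theory Submission
  imports Defs
begin

lemma sf_sum: assumes "subfield K" "\<forall>x\<in>A. f x \<in> K" shows "sum f A \<in> K"
proof (cases "finite A")
  case True then show ?thesis using assms(2)
    by (induction A rule: finite_induct) (use assms(1) in \<open>auto simp: subfield_def\<close>)
next
  case False then show ?thesis using assms(1) by (simp add: subfield_def)
qed

lemma polys_0: "subfield K \<Longrightarrow> 0 \<in> polys K V"
  by (simp add: polys_def subfield_def)

lemma polys_add: "subfield K \<Longrightarrow> f \<in> polys K V \<Longrightarrow> g \<in> polys K V \<Longrightarrow> f + g \<in> polys K V"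
  unfolding polys_def subfield_def using keys_add[of f g] by (auto simp: lookup_add) blast

lemma polys_single: "subfield K \<Longrightarrow> c \<in> K \<Longrightarrow> Poly_Mapping.keys m \<subseteq> V \<Longrightarrow> Poly_Mapping.single m c \<in> polys K V"
  unfolding polys_def subfield_def by (auto simp: lookup_single when_def)

lemma polys_sum: assumes "subfield K" "\<forall>x\<in>A. f x \<in> polys K V" shows "sum f A \<in> polys K V"
proof (cases "finite A")
  case True then show ?thesis using assms(2)
    by (induction A rule: finite_induct) (use assms(1) in \<open>auto simp: polys_0 polys_add\<close>)
next
  case False then show ?thesis using assms(1) by (simp add: polys_0)
qed

lemma expand: assumes "finite S" "Poly_Mapping.keys f \<subseteq> S"
  shows "(\<Sum>m\<in>S. Poly_Mapping.single m (Poly_Mapping.lookup f m)) = f"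
proof (rule poly_mapping_eqI)
  fix k
  have "Poly_Mapping.lookup (\<Sum>m\<in>S. Poly_Mapping.single m (Poly_Mapping.lookup f m)) k = (\<Sum>m\<in>S. (Poly_Mapping.lookup f m when m = k))"
    by (simp add: lookup_sum lookup_single)
  also have "\<dots> = (if k \<in> S then Poly_Mapping.lookup f k else 0)"
    using assms(1) by (simp add: when_def)
  also have "\<dots> = Poly_Mapping.lookup f k" using assms(2) by (auto simp: in_keys_iff)
  finally show "Poly_Mapping.lookup (\<Sum>m\<in>S. Poly_Mapping.single m (Poly_Mapping.lookup f m)) k = Poly_Mapping.lookup f k" .
qed

lemma polys_mult: assumes K: "subfield K" and f: "f \<in> polys K V" and g: "g \<in> polys K V"
  shows "f * g \<in> polys K V"
proof -
  have "f * g = (\<Sum>k\<in>Poly_Mapping.keys f. Poly_Mapping.single k (Poly_Mapping.lookup f k)) * (\<Sum>l\<in>Poly_Mapping.keys g. Poly_Mapping.single l (Poly_Mapping.lookup g l))"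
    by (simp add: expand)
  also have "\<dots> = (\<Sum>k\<in>Poly_Mapping.keys f. \<Sum>l\<in>Poly_Mapping.keys g. Poly_Mapping.single (k + l) (Poly_Mapping.lookup f k * Poly_Mapping.lookup g l))"
    by (simp add: sum_distrib_left sum_distrib_right mult_single) (rule sum.swap)
  finally have eq: "f * g = \<dots>" .
  have "Poly_Mapping.keys (k + l) \<subseteq> V" if "k \<in> Poly_Mapping.keys f" "l \<in> Poly_Mapping.keys g" for k l :: "nat \<Rightarrow>\<^sub>0 nat"
    using keys_add[of k l] f g that unfolding polys_def by blast
  moreover have "Poly_Mapping.lookup f k * Poly_Mapping.lookup g l \<in> K" for k l
    using f g K by (auto simp: polys_def subfield_def)
  ultimately show ?thesis unfolding eq
    by (intro polys_sum[OF K] ballI polys_single[OF K]) auto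
qed

lemma lookup_mult_single0: fixes f :: "'b::comm_monoid_add \<Rightarrow>\<^sub>0 'a::comm_ring_1"
  shows "Poly_Mapping.lookup (f * Poly_Mapping.single 0 c) k = Poly_Mapping.lookup f k * c"
proof -
  have "f * Poly_Mapping.single 0 c = Poly_Mapping.map ((*) c) f"
    by (metis mult_map_scale_conv_mult mult.commute)
  then show ?thesis by (simp add: map.rep_eq when_def mult.commute)
qed

lemma lc_zero: "(\<lambda>i. 0) \<in> lin_comb (R :: 'a::comm_ring_1 mpol set) S"
  unfolding lin_comb_def by (rule CollectI, rule exI[of _ 0]) auto

lemma lc_add: fixes R :: "'a::comm_ring_1 mpol set" assumes "u \<in> lin_comb R S" "u' \<in> lin_comb R S"
  shows "(\<lambda>i. u i + u' i) \<in> lin_comb R S"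
proof -
  obtain r and c :: "nat \<Rightarrow> 'a mpol" and g where 1: "\<forall>j<r. c j \<in> R \<and> g j \<in> S" "u = (\<lambda>i. \<Sum>j<r. g j i * c j)"
    using assms(1) unfolding lin_comb_def by blast
  obtain r' and c' :: "nat \<Rightarrow> 'a mpol" and g' where 2: "\<forall>j<r'. c' j \<in> R \<and> g' j \<in> S" "u' = (\<lambda>i. \<Sum>j<r'. g' j i * c' j)"
    using assms(2) unfolding lin_comb_def by blast
  define C where "C j = (if j < r then c j else c' (j - r))" for j
  define G where "G j = (if j < r then g j else g' (j - r))" for j
  have "\<forall>j<r+r'. C j \<in> R \<and> G j \<in> S" using 1 2 by (auto simp: C_def G_def)
  moreover have "(\<lambda>i. u i + u' i) = (\<lambda>i. \<Sum>j<r+r'. G j i * C j)"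
  proof
    fix i
    have "(\<Sum>j<r+r'. G j i * C j) = (\<Sum>j<r. G j i * C j) + (\<Sum>j<r'. G (r + j) i * C (r + j))"
      by (induction r') (simp_all add: ac_simps)
    then show "u i + u' i = (\<Sum>j<r+r'. G j i * C j)" using 1 2 by (simp add: C_def G_def)
  qed
  ultimately show ?thesis unfolding lin_comb_def by blast
qed

lemma lc_scale: fixes R :: "'a::comm_ring_1 mpol set" assumes "u \<in> lin_comb R S" "\<forall>a\<in>R. \<forall>b\<in>R. a * b \<in> R" "v \<in> R"
  shows "(\<lambda>i. u i * v) \<in> lin_comb R S"
proof -
  obtain r and c :: "nat \<Rightarrow> 'a mpol" and g where 1: "\<forall>j<r. c j \<in> R \<and> g j \<in> S" "u = (\<lambda>i. \<Sum>j<r. g j i * c j)"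
    using assms(1) unfolding lin_comb_def by blast
  have "\<forall>j<r. c j * v \<in> R \<and> g j \<in> S" using 1 assms by auto
  moreover have "(\<lambda>i. u i * v) = (\<lambda>i. \<Sum>j<r. g j i * (c j * v))"
    using 1 by (simp add: sum_distrib_right mult.assoc)
  ultimately show ?thesis unfolding lin_comb_def
    by (intro CollectI exI[of _ r] exI[of _ "\<lambda>j. c j * v"] exI[of _ g]) auto
qed

lemma lc_sum: fixes R :: "'a::comm_ring_1 mpol set" and r :: nat assumes "\<forall>j<r. w j \<in> lin_comb R S" "\<forall>j<r. v j \<in> R" "\<forall>a\<in>R. \<forall>b\<in>R. a * b \<in> R"
  shows "(\<lambda>i. \<Sum>j<r. w j i * v j) \<in> lin_comb R S"
  using assms
proof (induction r)
  case 0 then show ?case using lc_zero by simp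
next
  case (Suc r)
  have "(\<lambda>i. \<Sum>j<r. w j i * v j) \<in> lin_comb R S" using Suc by auto
  moreover have "(\<lambda>i. w r i * v r) \<in> lin_comb R S" using Suc by (intro lc_scale) auto
  ultimately show ?case using lc_add by fastforce
qed

lemma lc_vecs: fixes K :: "'a::field set" assumes K: "subfield K" and G: "G \<subseteq> vecs (polys K V) p"
  shows "lin_comb (polys K V) G \<subseteq> vecs (polys K V) p"
proof
  fix u assume "u \<in> lin_comb (polys K V) G"
  then obtain r and c :: "nat \<Rightarrow> 'a mpol" and g where 1: "\<forall>j<r. c j \<in> polys K V \<and> g j \<in> G" "u = (\<lambda>i. \<Sum>j<r. g j i * c j)"
    unfolding lin_comb_def by blast
  have "u i \<in> polys K V" if "i < p" for i
    using 1 G that by (auto intro!: polys_sum[OF K] polys_mult[OF K] simp: vecs_def)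
  moreover have "u i = 0" if "i \<ge> p" for i
  proof -
    have "\<forall>j<r. g j i = 0" using 1 G that by (auto simp: vecs_def)
    then show ?thesis using 1 by simp
  qed
  ultimately show "u \<in> vecs (polys K V) p" by (simp add: vecs_def)
qed

lemma descent:
  fixes K :: "'a::field set" and T :: "'t set" and E :: "'e set" and a :: "'e \<Rightarrow> 't \<Rightarrow> 'a"
  assumes "finite T" "subfield K" "\<forall>e\<in>E. \<forall>t\<in>T. a e t \<in> K" "\<forall>e\<in>E. c e \<in> K"
    "\<forall>e\<in>E. (\<Sum>t\<in>T. a e t * y t) = c e"
  shows "\<exists>z. (\<forall>t\<in>T. z t \<in> K) \<and> (\<forall>e\<in>E. (\<Sum>t\<in>T. a e t * z t) = c e)"
  using assms
proof (induction T arbitrary: a c y rule: finite_induct)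
  case empty
  then show ?case by auto
next
  case (insert s T)
  note K = insert.prems(1)
  have Kc: "x + y \<in> K" "x - y \<in> K" "x * y \<in> K" "inverse x \<in> K" if "x \<in> K" "y \<in> K" for x y
    using K that by (auto simp: subfield_def)
  have Kdiv: "x / y \<in> K" if "x \<in> K" "y \<in> K" for x y
    using Kc that by (simp add: divide_inverse)
  show ?case
  proof (cases "\<exists>e0\<in>E. a e0 s \<noteq> 0")
    case False
    have "\<forall>e\<in>E. (\<Sum>t\<in>T. a e t * y t) = c e" using insert False by auto
    then obtain z where z: "\<forall>t\<in>T. z t \<in> K" "\<forall>e\<in>E. (\<Sum>t\<in>T. a e t * z t) = c e"
      using insert.IH[of a c y] insert.prems by auto
    have "0 \<in> K" using K by (simp add: subfield_def)
    moreover have "(\<Sum>t\<in>T. a e t * (z(s := 0)) t) = (\<Sum>t\<in>T. a e t * z t)" for e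
      using insert.hyps by (intro sum.cong) auto
    ultimately show ?thesis using z False insert.hyps
      by (intro exI[of _ "z(s := 0)"]) auto
  next
    case True
    then obtain e0 where e0: "e0 \<in> E" "a e0 s \<noteq> 0" by blast
    define a' where "a' e t = a e t - a e s * a e0 t / a e0 s" for e t
    define c' where "c' e = c e - a e s * c e0 / a e0 s" for e
    have sumins: "(\<Sum>t\<in>insert s T. a e t * x t) = a e s * x s + (\<Sum>t\<in>T. a e t * x t)" for e x
      using insert.hyps by simp
    have lin: "(\<Sum>t\<in>T. a' e t * x t) = (\<Sum>t\<in>T. a e t * x t) - a e s / a e0 s * (\<Sum>t\<in>T. a e0 t * x t)" for e x
      by (simp add: a'_def algebra_simps sum_subtractf sum_distrib_left)
    have "\<forall>e\<in>E. (\<Sum>t\<in>T. a' e t * y t) = c' e"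
    proof
      fix e assume e: "e \<in> E"
      have 1: "(\<Sum>t\<in>T. a e t * y t) = c e - a e s * y s" using insert.prems(4) e sumins[of e y] by auto
      have 2: "(\<Sum>t\<in>T. a e0 t * y t) = c e0 - a e0 s * y s" using insert.prems(4) e0 sumins[of e0 y] by auto
      show "(\<Sum>t\<in>T. a' e t * y t) = c' e" unfolding lin 1 2 c'_def using e0(2)
        by (simp add: field_simps)
    qed
    moreover have "\<forall>e\<in>E. \<forall>t\<in>T. a' e t \<in> K" using insert.prems e0 unfolding a'_def
      by (auto intro!: Kc Kdiv)
    moreover have "\<forall>e\<in>E. c' e \<in> K" using insert.prems e0 unfolding c'_def
      by (auto intro!: Kc Kdiv)
    ultimately obtain z where z: "\<forall>t\<in>T. z t \<in> K" "\<forall>e\<in>E. (\<Sum>t\<in>T. a' e t * z t) = c' e"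
      using insert.IH[of a' c' y] K by blast
    define zs where "zs = (c e0 - (\<Sum>t\<in>T. a e0 t * z t)) / a e0 s"
    define z' where "z' = z(s := zs)"
    have sz: "(\<Sum>t\<in>T. a e t * z' t) = (\<Sum>t\<in>T. a e t * z t)" for e
      using insert.hyps by (auto simp: z'_def intro!: sum.cong)
    have "zs \<in> K" unfolding zs_def using insert.prems e0 z
      by (auto intro!: Kc Kdiv sf_sum[OF K])
    then have "\<forall>t\<in>insert s T. z' t \<in> K" using z by (auto simp: z'_def)
    moreover have "\<forall>e\<in>E. (\<Sum>t\<in>insert s T. a e t * z' t) = c e"
    proof
      fix e assume e: "e \<in> E"
      have 3: "(\<Sum>t\<in>T. a e t * z t) = c' e + a e s / a e0 s * (\<Sum>t\<in>T. a e0 t * z t)"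
        using z(2) e lin[of e z] by simp
      show "(\<Sum>t\<in>insert s T. a e t * z' t) = c e"
        unfolding sumins sz 3 using e0(2) by (simp add: z'_def zs_def c'_def field_simps)
    qed
    ultimately show ?thesis by blast
  qed
qed

theorem proposition1p1:
  fixes K :: "'a::field set" and n p r :: nat
    and M :: "(nat \<Rightarrow> 'a mpol) set" and J :: "nat \<Rightarrow> nat set"
    and w :: "nat \<Rightarrow> nat \<Rightarrow> 'a mpol" and vh :: "nat \<Rightarrow> 'a mpol"
  assumes K: "subfield K"
    and M: "fg_submodule (polys K {..<n}) p M"
    and J: "\<forall>i<p. J i \<subseteq> {..<n}"
    and w: "\<forall>j<r. w j \<in> M"
    and vh: "\<forall>j<r. vh j \<in> polys UNIV {..<n}"
    and uh: "(\<lambda>i. \<Sum>j<r. w j i * vh j) \<in> lin_comb (polys UNIV {..<n}) M \<inter>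
               {u. \<forall>i<p. u i \<in> polys UNIV (J i)}"
  shows "\<exists>v. (\<forall>j<r. v j \<in> polys K {..<n}) \<and>
     (\<lambda>i. \<Sum>j<r. w j i * v j) \<in> M \<inter> {u. \<forall>i<p. u i \<in> polys K (J i)} \<and>
     (INF i\<in>{..<p}. ord (\<Sum>j<r. w j i * v j)) = (INF i\<in>{..<p}. ord (\<Sum>j<r. w j i * vh j))"
proof -
  define R where "R = polys K {..<n}"
  obtain G where G: "finite G" "G \<subseteq> vecs R p" "M = lin_comb R G"
    using M unfolding fg_submodule_def R_def by blast
  have Rmult: "\<forall>a\<in>R. \<forall>b\<in>R. a * b \<in> R" unfolding R_def using polys_mult[OF K] by blast
  have Mvecs: "M \<subseteq> vecs R p" unfolding G(3) R_def using lc_vecs[OF K] G(2) R_def by blast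
  have wR: "w j i \<in> R" if "j < r" "i < p" for j i using w Mvecs that by (auto simp: vecs_def)
  define uh where "uh = (\<lambda>i. \<Sum>j<r. w j i * vh j)"
  define d where "d = (INF i\<in>{..<p}. ord (uh i))"
  have K01: "0 \<in> K" "1 \<in> K" using K by (auto simp: subfield_def)
  show ?thesis
  proof (cases "d = \<infinity>")
    case True
    have "(INF i\<in>{..<p}. ord (0 :: 'a mpol)) = \<infinity>" by (simp add: ord_def top_enat_def[symmetric])
    then show ?thesis using True lc_zero[of R G] G(3) polys_0[OF K]
      by (intro exI[of _ "\<lambda>j. 0"]) (auto simp: d_def uh_def)
  next
    case False
    then have p0: "p \<noteq> 0" by (auto simp: d_def top_enat_def[symmetric])
    have "d = Min ((\<lambda>i. ord (uh i)) ` {..<p})" unfolding d_def using p0 by (intro cInf_eq_Min) auto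
    moreover have "Min ((\<lambda>i. ord (uh i)) ` {..<p}) \<in> (\<lambda>i. ord (uh i)) ` {..<p}"
      using p0 by (intro Min_in) auto
    ultimately obtain i0 where i0: "i0 < p" "d = ord (uh i0)" by auto
    have uh0: "uh i0 \<noteq> 0" using i0 False by (auto simp: ord_def)
    define dd where "dd = Min (mdeg ` Poly_Mapping.keys (uh i0))"
    have dd: "d = enat dd" using i0 uh0 by (simp add: ord_def dd_def)
    have "Poly_Mapping.keys (uh i0) \<noteq> {}" using uh0 by simp
    then have "dd \<in> mdeg ` Poly_Mapping.keys (uh i0)" unfolding dd_def by (intro Min_in) auto
    then obtain m0 where m0: "m0 \<in> Poly_Mapping.keys (uh i0)" "mdeg m0 = dd" by auto
    have dle: "d \<le> ord (uh i)" if "i < p" for i unfolding d_def using that by (auto intro: INF_lower)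
    have uhpol: "uh i \<in> polys UNIV (J i)" if "i < p" for i using uh that by (auto simp: uh_def)
    define S where "S = (\<Union>j<r. Poly_Mapping.keys (vh j))"
    have finS: "finite S" by (simp add: S_def)
    have Skeys: "Poly_Mapping.keys m \<subseteq> {..<n}" if "m \<in> S" for m using vh that by (auto simp: S_def polys_def)
    define T where "T = {..<r} \<times> S"
    define a where "a = (\<lambda>(i, mm) (j, m). Poly_Mapping.lookup (w j i * Poly_Mapping.single m 1) mm)"
    define V where "V z j = (\<Sum>m\<in>S. Poly_Mapping.single m (z (j, m)))" for z :: "nat \<times> (nat \<Rightarrow>\<^sub>0 nat) \<Rightarrow> 'a" and j
    have key: "Poly_Mapping.lookup (\<Sum>j<r. w j i * V z j) mm = (\<Sum>t\<in>T. a (i, mm) t * z t)" for z i mm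
    proof -
      have "Poly_Mapping.lookup (w j i * Poly_Mapping.single m c) mm = Poly_Mapping.lookup (w j i * Poly_Mapping.single m 1) mm * c" for j m c
      proof -
        have "w j i * Poly_Mapping.single m c = (w j i * Poly_Mapping.single m 1) * Poly_Mapping.single 0 c"
          by (simp only: mult.assoc mult_single add_0_right mult_1_left)
        then show ?thesis by (simp only: lookup_mult_single0)
      qed
      note fact = this
      have "Poly_Mapping.lookup (\<Sum>j<r. w j i * V z j) mm = (\<Sum>j<r. \<Sum>m\<in>S. Poly_Mapping.lookup (w j i * Poly_Mapping.single m (z (j, m))) mm)"
        by (simp add: V_def sum_distrib_left lookup_sum)
      also have "\<dots> = (\<Sum>j<r. \<Sum>m\<in>S. Poly_Mapping.lookup (w j i * Poly_Mapping.single m 1) mm * z (j, m))"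
        by (rule sum.cong[OF refl], rule sum.cong[OF refl], rule fact)
      also have "\<dots> = (\<Sum>t\<in>T. a (i, mm) t * z t)"
        by (simp add: sum.cartesian_product T_def a_def split_beta)
      finally show ?thesis .
    qed
    define y0 where "y0 = (\<lambda>(j, m). Poly_Mapping.lookup (vh j) m)"
    have vhV: "vh j = V y0 j" if "j < r" for j
    proof -
      have "(\<Sum>m\<in>S. Poly_Mapping.single m (Poly_Mapping.lookup (vh j) m)) = vh j"
        by (rule expand[OF finS]) (use that in \<open>auto simp: S_def\<close>)
      then show ?thesis by (simp add: V_def y0_def)
    qed
    have uhlook: "Poly_Mapping.lookup (uh i) mm = (\<Sum>t\<in>T. a (i, mm) t * y0 t)" for i mm
    proof -
      have "uh i = (\<Sum>j<r. w j i * V y0 j)" unfolding uh_def using vhV by simp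
      then show ?thesis using key by simp
    qed
    define c0 where "c0 = Poly_Mapping.lookup (uh i0) m0"
    have c0: "c0 \<noteq> 0" using m0 by (simp add: c0_def in_keys_iff)
    define E where "E = {(i, mm). i < p \<and> (\<not> Poly_Mapping.keys mm \<subseteq> J i \<or> mdeg mm < dd)} \<union> {(i0, m0)}"
    define cc where "cc e = (if e = (i0, m0) then 1 else (0::'a))" for e
    have m0J: "Poly_Mapping.keys m0 \<subseteq> J i0" using uhpol[OF i0(1)] m0 by (auto simp: polys_def)
    have notin: "(i, mm) \<noteq> (i0, m0)" if "i < p" "\<not> Poly_Mapping.keys mm \<subseteq> J i \<or> mdeg mm < dd" for i mm
      using that m0J m0 by auto
    have zero_uh: "Poly_Mapping.lookup (uh i) mm = 0" if "i < p" "\<not> Poly_Mapping.keys mm \<subseteq> J i \<or> mdeg mm < dd" for i mm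
    proof (rule ccontr)
      assume "Poly_Mapping.lookup (uh i) mm \<noteq> 0"
      then have mk: "mm \<in> Poly_Mapping.keys (uh i)" by (simp add: in_keys_iff)
      show False using that(2)
      proof
        assume "\<not> Poly_Mapping.keys mm \<subseteq> J i" then show False using uhpol[OF that(1)] mk by (auto simp: polys_def)
      next
        assume lt: "mdeg mm < dd"
        have "uh i \<noteq> 0" using mk by auto
        then have "ord (uh i) \<le> enat (mdeg mm)" using mk by (simp add: ord_def)
        then have "enat dd \<le> enat (mdeg mm)" using dle[OF that(1)] dd by (metis order_trans)
        then show False using lt by simp
      qed
    qed
    have eqs: "\<forall>e\<in>E. (\<Sum>t\<in>T. a e t * (y0 t / c0)) = cc e"
    proof
      fix e assume e: "e \<in> E"
      obtain i mm where imm: "e = (i, mm)" by (cases e)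
      have "(\<Sum>t\<in>T. a e t * (y0 t / c0)) = Poly_Mapping.lookup (uh i) mm / c0"
        unfolding imm uhlook by (simp add: sum_divide_distrib)
      note eqv = this
      show "(\<Sum>t\<in>T. a e t * (y0 t / c0)) = cc e"
      proof (cases "e = (i0, m0)")
        case True
        then show ?thesis using eqv c0 by (simp add: cc_def imm c0_def)
      next
        case False
        then have "i < p" "\<not> Poly_Mapping.keys mm \<subseteq> J i \<or> mdeg mm < dd"
          using e by (auto simp: E_def imm)
        then show ?thesis using eqv False zero_uh by (simp add: cc_def imm)
      qed
    qed
    have aK: "\<forall>e\<in>E. \<forall>t\<in>T. a e t \<in> K"
    proof (intro ballI)
      fix e t assume e: "e \<in> E" and t: "t \<in> T"
      obtain i mm where imm: "e = (i, mm)" by (cases e)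
      obtain j m where jm: "t = (j, m)" by (cases t)
      have ip: "i < p" using e i0 by (auto simp: E_def imm)
      have "j < r" "m \<in> S" using t by (auto simp: T_def jm)
      then have "w j i * Poly_Mapping.single m 1 \<in> R" using wR ip Rmult polys_single[OF K K01(2) Skeys] R_def by auto
      then show "a e t \<in> K" by (simp add: a_def imm jm R_def polys_def)
    qed
    have ccK: "\<forall>e\<in>E. cc e \<in> K" using K01 by (simp add: cc_def)
    obtain z where z: "\<forall>t\<in>T. z t \<in> K" "\<forall>e\<in>E. (\<Sum>t\<in>T. a e t * z t) = cc e"
      using descent[OF _ K aK ccK eqs] by (auto simp: T_def finS)
    define v where "v = V z"
    have vR: "\<forall>j<r. v j \<in> R"
      using z(1) unfolding v_def V_def R_def
      by (auto intro!: polys_sum[OF K] polys_single[OF K] Skeys simp: T_def)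
    define u where "u = (\<lambda>i. \<Sum>j<r. w j i * v j)"
    have uM: "u \<in> M" unfolding u_def G(3) using w G(3) vR Rmult by (intro lc_sum) auto
    have uR: "u i \<in> R" if "i < p" for i using uM Mvecs that by (auto simp: vecs_def)
    have ulook: "Poly_Mapping.lookup (u i) mm = (\<Sum>t\<in>T. a (i, mm) t * z t)" for i mm
      unfolding u_def v_def using key by simp
    have uzero: "Poly_Mapping.lookup (u i) mm = 0" if "i < p" "\<not> Poly_Mapping.keys mm \<subseteq> J i \<or> mdeg mm < dd" for i mm
      using z(2) that notin unfolding ulook by (auto simp: E_def cc_def)
    have uone: "Poly_Mapping.lookup (u i0) m0 = 1"
      using z(2) unfolding ulook by (auto simp: E_def cc_def)
    have upol: "u i \<in> polys K (J i)" if "i < p" for i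
    proof -
      have "\<forall>mm. Poly_Mapping.lookup (u i) mm \<in> K" using uR[OF that] by (simp add: R_def polys_def)
      moreover have "Poly_Mapping.keys mm \<subseteq> J i" if "mm \<in> Poly_Mapping.keys (u i)" for mm
        using uzero[OF \<open>i < p\<close>, of mm] that by (auto simp: in_keys_iff)
      ultimately show ?thesis by (simp add: polys_def)
    qed
    have uge: "d \<le> ord (u i)" if "i < p" for i
    proof (cases "u i = 0")
      case True then show ?thesis by (simp add: ord_def)
    next
      case False
      have "\<forall>mm\<in>Poly_Mapping.keys (u i). dd \<le> mdeg mm"
        using uzero[OF that] by (auto simp: in_keys_iff not_less[symmetric])
      then have "dd \<le> Min (mdeg ` Poly_Mapping.keys (u i))" using False by (subst Min_ge_iff) auto
      then show ?thesis using False dd by (simp add: ord_def)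
    qed
    have ule: "ord (u i0) \<le> d"
    proof -
      have m0u: "m0 \<in> Poly_Mapping.keys (u i0)" using uone by (simp add: in_keys_iff)
      then have "u i0 \<noteq> 0" by auto
      moreover have "Min (mdeg ` Poly_Mapping.keys (u i0)) \<le> dd"
        using m0u m0 by (metis Min_le finite_imageI finite_keys image_eqI)
      ultimately show ?thesis using dd by (simp add: ord_def)
    qed
    have "(INF i\<in>{..<p}. ord (u i)) = d"
      using uge ule i0 by (intro antisym) (auto intro: INF_lower2 INF_greatest)
    then show ?thesis
      using vR uM upol unfolding R_def
      by (intro exI[of _ v]) (auto simp: u_def d_def uh_def)
  qed
qed
end
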